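(* Let $\rho,\mu,\lambda$ satisfy the standing assumptions in the context. Define the matrix-valued function $\mathbf{G}(\mathbf{q}):=\int_{\mathbb{R}^d}\rho(\mathbf{q}-\mathbf{y})\frac{(\mathbf{q}-\mathbf{y})\otimes(\mathbf{q}-\mathbf{y})}{|\mathbf{q}-\mathbf{y}|^2}\mu_s(\mathbf{q},\mathbf{y})\,d\mathbf{y}$ and the multiplication operator $\mathbb{G}\boldsymbol{\psi}(\mathbf{q}):=\mathbf{G}(\mathbf{q})\boldsymbol{\psi}(\mathbf{q})$. Then $\mathbb{G}:[L^2(\mathbb{T}^d)]^d\to[L^2(\mathbb{T}^d)]^d$ is a bounded invertible linear operator.
   Context: Standing assumptions: $\rho\in L^1(\mathbb{R}^d)$ with $\rho\ge0$, $\rho(-\mathbf{z})=\rho(\mathbf{z})$, $a_1:=\int\rho>0$, $a_2:=\int|\mathbf{z}|^2\rho<\infty$; there exist $\delta_0>0$ and an open $\mathcal{J}\subset\mathbb{S}^{d-1}$ with $\mathcal{H}^{d-1}(\mathcal{J})>0$ such that $\Lambda\cap B_{\delta_0}(\mathbf{0})\subset\operatorname{supp}\rho$, $\Lambda=\{\mathbf{x}:\mathbf{x}/|\mathbf{x}|\in\mathcal{J}\cup-\mathcal{J}\}$. $\mu$ is periodic with period cell $\mathbb{T}^d=[0,1]^d$; $\lambda(\mathbf{x},\mathbf{y})$ is unit-periodic in $\mathbf{y}$; $0<\alpha_1\le\lambda(\mathbf{x},\mathbf{y}),\mu(\mathbf{y})\le\alpha_2<\infty$; $\lambda(\cdot,\mathbf{y})\in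 C^\infty$. $\mu_s(\mathbf{x},\mathbf{y})=\frac12(\mu(\mathbf{x})+\mu(\mathbf{y}))$. $[L^2(\mathbb{T}^d)]^d$ denotes the space of $[0,1]^d$-periodic vector fields on $\mathbb{R}^d$ that are square integrable over $\mathbb{T}^d$. *)

theory Defs
  imports "HOL-Analysis.Analysis"
begin

definition unit_periodic :: "(real^'d \<Rightarrow> 'b) \<Rightarrow> bool" where
  "unit_periodic f \<longleftrightarrow> (\<forall>x k. (\<forall>i. k $ i \<in> \<int>) \<longrightarrow> f (x + k) = f x)"

definition cell :: "(real^'d) set" where
  "cell = cbox 0 One"

text \<open>[L^2(T^d)]^d: periodic measurable vector fields square integrable over the cell.\<close>
definition L2per :: "(real^'d \<Rightarrow> real^'d) \<Rightarrow> bool" where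
  "L2per \<psi> \<longleftrightarrow> \<psi> \<in> borel_measurable lborel \<and> unit_periodic \<psi> \<and>
      set_integrable lborel cell (\<lambda>x. (norm (\<psi> x))\<^sup>2)"

definition L2norm_sq :: "(real^'d \<Rightarrow> real^'d) \<Rightarrow> real" where
  "L2norm_sq \<psi> = (LINT x:cell|lborel. (norm (\<psi> x))\<^sup>2)"

definition esupp :: "(real^'d \<Rightarrow> real) \<Rightarrow> (real^'d) set" where
  "esupp \<rho> = {x. \<forall>e>0. emeasure lborel ({z. \<rho> z \<noteq> 0} \<inter> ball x e) > 0}"

definition outer :: "real^'d \<Rightarrow> real^'d \<Rightarrow> real^'d^'d" where
  "outer a b = (\<chi> i j. a $ i * b $ j)"

definition mu_s :: "(real^'d \<Rightarrow> real) \<Rightarrow> real^'d \<Rightarrow> real^'d \<Rightarrow> real" where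
  "mu_s \<mu> x y = (\<mu> x + \<mu> y) / 2"

text \<open>The matrix field G(q).  (At y = q the integrand is 0 by the HOL convention
  x/0 = 0; this is a null set.)\<close>
definition Gmat :: "(real^'d \<Rightarrow> real) \<Rightarrow> (real^'d \<Rightarrow> real) \<Rightarrow> real^'d \<Rightarrow> real^'d^'d" where
  "Gmat \<rho> \<mu> q = (LINT y|lborel.
      (\<rho> (q - y) * mu_s \<mu> q y / (norm (q - y))\<^sup>2) *\<^sub>R outer (q - y) (q - y))"

definition Gop :: "(real^'d \<Rightarrow> real) \<Rightarrow> (real^'d \<Rightarrow> real) \<Rightarrow> (real^'d \<Rightarrow> real^'d) \<Rightarrow> real^'d \<Rightarrow> real^'d" where
  "Gop \<rho> \<mu> \<psi> q = Gmat \<rho> \<mu> q *v \<psi> q"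

end

theory Submission
  imports Defs
begin

lemma meas_vec_nth[measurable (raw)]:
  fixes f :: "'a \<Rightarrow> 'b::euclidean_space^'n"
  assumes "f \<in> borel_measurable M"
  shows "(\<lambda>x. f x $ i) \<in> borel_measurable M"
  using borel_measurable_continuous_on[OF linear_continuous_on[OF bounded_linear_vec_nth] assms] .

lemma meas_vec_lambda[measurable (raw)]:
  fixes g :: "'a \<Rightarrow> 'n::finite \<Rightarrow> 'b::euclidean_space"
  assumes "\<And>i. (\<lambda>x. g x i) \<in> borel_measurable M"
  shows "(\<lambda>x. vec_lambda (g x)) \<in> borel_measurable M"
proof (subst borel_measurable_euclidean_space, intro ballI)
  fix b :: "'b^'n" assume "b \<in> Basis"
  then obtain i u where b: "b = axis i u" "u \<in> Basis" by (auto simp: Basis_vec_def)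
  have "(\<lambda>x. g x i \<bullet> u) \<in> borel_measurable M" using assms[of i] by measurable
  then show "(\<lambda>x. vec_lambda (g x) \<bullet> b) \<in> borel_measurable M" by (simp add: b inner_axis)
qed

lemma transl:
  fixes f :: "real^'d \<Rightarrow> 'b::{banach,second_countable_topology}"
  assumes f: "f \<in> borel_measurable borel"
  shows "integrable lborel (\<lambda>y. f (c + y)) \<longleftrightarrow> integrable lborel f"
    and "(\<integral>y. f (c + y) \<partial>lborel) = integral\<^sup>L lborel f"
proof -
  have m: "(+) c \<in> measurable lborel borel" by simp
  show "integrable lborel (\<lambda>y. f (c + y)) \<longleftrightarrow> integrable lborel f"
    using integrable_distr_eq[OF m f] lborel_distr_plus[of c] by simp
  show "(\<integral>y. f (c + y) \<partial>lborel) = integral\<^sup>L lborel f"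
    using integral_distr[OF m f] lborel_distr_plus[of c] by simp
qed

lemma outer_mult: "outer a a *v x = (a \<bullet> x) *\<^sub>R (a::real^'d)"
  by (simp add: vec_eq_iff outer_def matrix_vector_mult_def inner_vec_def sum_distrib_left mult_ac)

lemma outer_qf: "\<eta> \<bullet> ((s *\<^sub>R outer a a) *v x) = s * (a \<bullet> x) * (a \<bullet> (\<eta>::real^'d))"
  by (simp add: scaleR_matrix_vector_assoc[symmetric] outer_mult inner_commute)

lemma norm_outer: "norm (outer a (a::real^'d)) \<le> real (CARD('d))^2 * (norm a)^2"
proof -
  have "norm (outer a a) \<le> (\<Sum>i\<in>UNIV. norm (outer a a $ i))" unfolding norm_vec_def by (rule L2_set_le_sum) simp
  also have "\<dots> \<le> (\<Sum>i\<in>UNIV. \<Sum>j\<in>UNIV. \<bar>outer a a $ i $ j\<bar>)"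
    by (intro sum_mono norm_le_l1_cart)
  also have "\<dots> \<le> (\<Sum>i\<in>(UNIV::'d set). \<Sum>j\<in>(UNIV::'d set). (norm a)^2)"
  proof -
    have h: "\<bar>outer a a $ i $ j\<bar> \<le> (norm a)^2" for i j
    proof -
    have "\<bar>a $ i * a $ j\<bar> \<le> norm a * norm a"
      unfolding abs_mult by (intro mult_mono component_le_norm_cart) auto
    then show "\<bar>outer a a $ i $ j\<bar> \<le> (norm a)^2" by (simp add: outer_def power2_eq_square)
    qed
    then show ?thesis by (intro sum_mono) auto
  qed
  also have "\<dots> = real (CARD('d))^2 * (norm a)^2" by (simp add: power2_eq_square)
  finally show ?thesis .
qed

lemma qf_integral:
  fixes F :: "'a \<Rightarrow> real^'d^'d"
  assumes "integrable M F"
  shows "\<eta> \<bullet> (integral\<^sup>L M F *v \<xi>) = (\<integral>y. \<eta> \<bullet> (F y *v \<xi>) \<partial>M)"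
    and "integrable M (\<lambda>y. \<eta> \<bullet> (F y *v \<xi>))"
proof -
  have bl: "bounded_linear (\<lambda>A::real^'d^'d. \<eta> \<bullet> (A *v \<xi>))"
  proof -
    have "linear (\<lambda>A::real^'d^'d. \<eta> \<bullet> (A *v \<xi>))"
      by (intro linearI) (simp_all add: matrix_vector_mult_add_rdistrib scaleR_matrix_vector_assoc[symmetric] inner_add_right)
    then show ?thesis using linear_conv_bounded_linear by blast
  qed
  show "\<eta> \<bullet> (integral\<^sup>L M F *v \<xi>) = (\<integral>y. \<eta> \<bullet> (F y *v \<xi>) \<partial>M)"
    using integral_bounded_linear[OF bl assms] by simp
  show "integrable M (\<lambda>y. \<eta> \<bullet> (F y *v \<xi>))"
    using integrable_bounded_linear[OF bl assms] .
qed


context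
  fixes \<rho> \<mu> :: "real^'d \<Rightarrow> real" and \<alpha>1 \<alpha>2 :: real
  assumes rho_int: "integrable lborel \<rho>"
    and rho_nonneg: "\<And>z. \<rho> z \<ge> 0"
    and rho_even: "\<And>z. \<rho> (- z) = \<rho> z"
    and mu_meas: "\<mu> \<in> borel_measurable lborel"
    and mu_per: "unit_periodic \<mu>"
    and alpha: "0 < \<alpha>1" "\<alpha>1 \<le> \<alpha>2"
    and mu_bounds: "\<And>y. \<alpha>1 \<le> \<mu> y \<and> \<mu> y \<le> \<alpha>2"
begin

lemma rho_meas[measurable]: "\<rho> \<in> borel_measurable borel"
  using borel_measurable_integrable[OF rho_int] by simp

lemma mu_meas'[measurable]: "\<mu> \<in> borel_measurable borel"
  using mu_meas by simp

definition KK :: "real^'d \<Rightarrow> real^'d \<Rightarrow> real^'d^'d" where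
  "KK q y = (\<rho> (q - y) * mu_s \<mu> q y / (norm (q - y))\<^sup>2) *\<^sub>R outer (q - y) (q - y)"

lemma Gmat_KK: "Gmat \<rho> \<mu> q = integral\<^sup>L lborel (KK q)"
  unfolding Gmat_def KK_def ..

lemma KK_meas[measurable]: "(\<lambda>(q, y). KK q y) \<in> borel_measurable (lborel \<Otimes>\<^sub>M lborel)"
  unfolding KK_def outer_def mu_s_def by measurable

lemma KK_meas1[measurable]: "KK q \<in> borel_measurable lborel"
  unfolding KK_def outer_def mu_s_def by measurable

lemma rho_shift: "\<rho> (q - y) = \<rho> (- q + y)"
  using rho_even[of "q - y"] by (simp add: algebra_simps)

lemma rho_shift_int: "integrable lborel (\<lambda>y. \<rho> (q - y))" "(\<integral>y. \<rho> (q - y) \<partial>lborel) = integral\<^sup>L lborel \<rho>"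
  unfolding rho_shift using transl[OF rho_meas, of "- q"] rho_int by auto

lemma KK_int: "integrable lborel (KK q)"
proof (rule Bochner_Integration.integrable_bound)
  show "integrable lborel (\<lambda>y. \<rho> (q - y) * (\<alpha>2 * real (CARD('d))^2))"
    using rho_shift_int(1) by simp
  show "AE y in lborel. norm (KK q y) \<le> norm (\<rho> (q - y) * (\<alpha>2 * real (CARD('d))^2))"
  proof (intro AE_I2)
    fix y
    let ?z = "q - y"
    have ms: "0 \<le> mu_s \<mu> q y" "mu_s \<mu> q y \<le> \<alpha>2"
      using mu_bounds[of q] mu_bounds[of y] alpha by (auto simp: mu_s_def)
    have "norm (KK q y) = \<rho> ?z * mu_s \<mu> q y / (norm ?z)\<^sup>2 * norm (outer ?z ?z)"
      unfolding KK_def using rho_nonneg[of ?z] ms by simp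
    also have "\<dots> \<le> \<rho> ?z * mu_s \<mu> q y / (norm ?z)\<^sup>2 * (real (CARD('d))^2 * (norm ?z)^2)"
      using rho_nonneg[of ?z] ms by (intro mult_left_mono norm_outer) auto
    also have "\<dots> \<le> \<rho> ?z * \<alpha>2 * real (CARD('d))^2"
      using rho_nonneg[of ?z] ms by (cases "?z = 0") (auto simp: mult.assoc intro!: mult_left_mono mult_right_mono)
    finally show "norm (KK q y) \<le> norm (\<rho> (q - y) * (\<alpha>2 * real (CARD('d))^2))"
      using rho_nonneg[of ?z] alpha by (simp add: mult_ac)
  qed
qed simp


lemma G_meas[measurable]: "Gmat \<rho> \<mu> \<in> borel_measurable lborel"
proof -
  have "(\<lambda>q. \<integral>y. KK q y \<partial>lborel) \<in> borel_measurable lborel"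
    by (rule lborel.borel_measurable_lebesgue_integral) (rule KK_meas)
  then show ?thesis by (simp add: Gmat_KK[abs_def])
qed

lemma G_per: "unit_periodic (Gmat \<rho> \<mu>)"
  unfolding unit_periodic_def
proof (intro allI impI)
  fix x k :: "real^'d" assume k: "\<forall>i. k $ i \<in> \<int>"
  have m: "KK (x + k) \<in> borel_measurable borel" using KK_meas1 by simp
  have "Gmat \<rho> \<mu> (x + k) = (\<integral>y. KK (x + k) (k + y) \<partial>lborel)"
    unfolding Gmat_KK using transl(2)[OF m, of k] by simp
  also have "\<dots> = (\<integral>y. KK x y \<partial>lborel)"
  proof (intro Bochner_Integration.integral_cong refl)
    fix y
    have "\<mu> (x + k) = \<mu> x" "\<mu> (k + y) = \<mu> y"
      using mu_per k unfolding unit_periodic_def by (metis add.commute)+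
    then show "KK (x + k) (k + y) = KK x y" by (simp add: KK_def mu_s_def)
  qed
  finally show "Gmat \<rho> \<mu> (x + k) = Gmat \<rho> \<mu> x" by (simp add: Gmat_KK)
qed

lemma G_qf:
  "\<eta> \<bullet> (Gmat \<rho> \<mu> q *v \<xi>) = (\<integral>y. \<rho> (q - y) * mu_s \<mu> q y / (norm (q - y))\<^sup>2 * ((q - y) \<bullet> \<xi>) * ((q - y) \<bullet> \<eta>) \<partial>lborel)"
  "integrable lborel (\<lambda>y. \<rho> (q - y) * mu_s \<mu> q y / (norm (q - y))\<^sup>2 * ((q - y) \<bullet> \<xi>) * ((q - y) \<bullet> \<eta>))"
  using qf_integral[OF KK_int[of q], of \<eta> \<xi>] unfolding Gmat_KK KK_def outer_qf by auto

lemma G_upper: "norm (Gmat \<rho> \<mu> q *v \<xi>) \<le> \<alpha>2 * integral\<^sup>L lborel \<rho> * norm \<xi>"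
proof -
  define v where "v = Gmat \<rho> \<mu> q *v \<xi>"
  have "(norm v)\<^sup>2 = v \<bullet> (Gmat \<rho> \<mu> q *v \<xi>)" by (simp add: v_def power2_norm_eq_inner)
  also have "\<dots> = (\<integral>y. \<rho> (q - y) * mu_s \<mu> q y / (norm (q - y))\<^sup>2 * ((q - y) \<bullet> \<xi>) * ((q - y) \<bullet> v) \<partial>lborel)"
    by (rule G_qf)
  also have "\<dots> \<le> (\<integral>y. \<rho> (q - y) * (\<alpha>2 * norm \<xi> * norm v) \<partial>lborel)"
  proof (intro integral_mono G_qf)
    show "integrable lborel (\<lambda>y. \<rho> (q - y) * (\<alpha>2 * norm \<xi> * norm v))"
      using rho_shift_int(1) by simp
    fix y
    let ?z = "q - y"
    have ms: "0 \<le> mu_s \<mu> q y" "mu_s \<mu> q y \<le> \<alpha>2"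
      using mu_bounds[of q] mu_bounds[of y] alpha by (auto simp: mu_s_def)
    have r: "0 \<le> \<rho> ?z" by (rule rho_nonneg)
    have cs: "(?z \<bullet> \<xi>) * (?z \<bullet> v) \<le> (norm ?z)\<^sup>2 * (norm \<xi> * norm v)"
    proof -
      have "(?z \<bullet> \<xi>) * (?z \<bullet> v) \<le> \<bar>?z \<bullet> \<xi>\<bar> * \<bar>?z \<bullet> v\<bar>" by (simp add: abs_mult[symmetric])
      also have "\<dots> \<le> (norm ?z * norm \<xi>) * (norm ?z * norm v)"
        by (intro mult_mono Cauchy_Schwarz_ineq2) auto
      finally show ?thesis by (simp add: power2_eq_square mult_ac)
    qed
    have "\<rho> ?z * mu_s \<mu> q y / (norm ?z)\<^sup>2 * (?z \<bullet> \<xi>) * (?z \<bullet> v)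
        = \<rho> ?z * mu_s \<mu> q y / (norm ?z)\<^sup>2 * ((?z \<bullet> \<xi>) * (?z \<bullet> v))" by simp
    also have "\<dots> \<le> \<rho> ?z * mu_s \<mu> q y / (norm ?z)\<^sup>2 * ((norm ?z)\<^sup>2 * (norm \<xi> * norm v))"
      using r ms cs by (intro mult_left_mono) auto
    also have "\<dots> \<le> \<rho> ?z * (\<alpha>2 * norm \<xi> * norm v)"
      using r ms by (cases "?z = 0") (auto simp: mult.assoc intro!: mult_left_mono mult_right_mono)
    finally show "\<rho> ?z * mu_s \<mu> q y / (norm ?z)\<^sup>2 * (?z \<bullet> \<xi>) * (?z \<bullet> v) \<le> \<rho> ?z * (\<alpha>2 * norm \<xi> * norm v)" .
  qed
  also have "\<dots> = \<alpha>2 * integral\<^sup>L lborel \<rho> * norm \<xi> * norm v"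
    using rho_shift_int(2) by (simp add: mult_ac)
  finally have *: "norm v * norm v \<le> (\<alpha>2 * integral\<^sup>L lborel \<rho> * norm \<xi>) * norm v"
    by (simp add: power2_eq_square)
  show ?thesis
  proof (cases "norm v = 0")
    case True
    have "0 \<le> integral\<^sup>L lborel \<rho>" using rho_nonneg by simp
    then show ?thesis using True alpha unfolding v_def by simp
  next
    case False
    then show ?thesis using * unfolding v_def by (simp add: mult_le_cancel_right)
  qed
qed


definition gg :: "real^'d \<Rightarrow> real^'d \<Rightarrow> real" where
  "gg \<xi> z = \<rho> z / (norm z)\<^sup>2 * (z \<bullet> \<xi>) * (z \<bullet> \<xi>)"

definition MM :: "real^'d^'d" where
  "MM = (\<integral>z. (\<rho> z / (norm z)\<^sup>2) *\<^sub>R outer z z \<partial>lborel)"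

lemma gg_meas[measurable]: "gg \<xi> \<in> borel_measurable borel"
  unfolding gg_def by measurable

lemma gg_nonneg: "0 \<le> gg \<xi> z"
  unfolding gg_def using rho_nonneg[of z]
  by (simp add: mult.assoc)

lemma gg_even: "gg \<xi> (- z) = gg \<xi> z"
  unfolding gg_def using rho_even[of z] by simp

lemma MM_int: "integrable lborel (\<lambda>z. (\<rho> z / (norm z)\<^sup>2) *\<^sub>R outer z z)"
proof (rule Bochner_Integration.integrable_bound)
  show "integrable lborel (\<lambda>z. \<rho> z * (real (CARD('d))^2))"
    using rho_int by simp
  show "AE z in lborel. norm ((\<rho> z / (norm z)\<^sup>2) *\<^sub>R outer z z) \<le> norm (\<rho> z * (real (CARD('d))^2))"
  proof (intro AE_I2)
    fix z :: "real^'d"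
    have "norm ((\<rho> z / (norm z)\<^sup>2) *\<^sub>R outer z z) = \<rho> z / (norm z)\<^sup>2 * norm (outer z z)"
      using rho_nonneg[of z] by simp
    also have "\<dots> \<le> \<rho> z / (norm z)\<^sup>2 * (real (CARD('d))^2 * (norm z)^2)"
      using rho_nonneg[of z] by (intro mult_left_mono norm_outer) auto
    also have "\<dots> \<le> \<rho> z * real (CARD('d))^2"
      using rho_nonneg[of z] by (cases "z = 0") auto
    finally show "norm ((\<rho> z / (norm z)\<^sup>2) *\<^sub>R outer z z) \<le> norm (\<rho> z * (real (CARD('d))^2))"
      using rho_nonneg[of z] by simp
  qed
  show "(\<lambda>z. (\<rho> z / (norm z)\<^sup>2) *\<^sub>R outer z z) \<in> borel_measurable lborel"
    unfolding outer_def by measurable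
qed

lemma hh_eq: "\<xi> \<bullet> (MM *v \<xi>) = integral\<^sup>L lborel (gg \<xi>)" "integrable lborel (gg \<xi>)"
  using qf_integral[OF MM_int, of \<xi> \<xi>] unfolding MM_def outer_qf gg_def[abs_def] by auto

lemma G_lower: "\<xi> \<bullet> (Gmat \<rho> \<mu> q *v \<xi>) \<ge> \<alpha>1 * (\<xi> \<bullet> (MM *v \<xi>))"
proof -
  have sh: "gg \<xi> (q - y) = gg \<xi> (- q + y)" for y
    using gg_even[of \<xi> "- q + y"] by (simp add: algebra_simps)
  have i1: "integrable lborel (\<lambda>y. gg \<xi> (q - y))"
    unfolding sh using transl(1)[OF gg_meas[of \<xi>], where c="- q"] hh_eq(2) by simp
  have i2: "(\<integral>y. gg \<xi> (q - y) \<partial>lborel) = integral\<^sup>L lborel (gg \<xi>)"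
    unfolding sh using transl(2)[OF gg_meas[of \<xi>], where c="- q"] by simp
  have "\<alpha>1 * (\<xi> \<bullet> (MM *v \<xi>)) = (\<integral>y. \<alpha>1 * gg \<xi> (q - y) \<partial>lborel)"
    using i2 hh_eq(1) by simp
  also have "\<dots> \<le> (\<integral>y. \<rho> (q - y) * mu_s \<mu> q y / (norm (q - y))\<^sup>2 * ((q - y) \<bullet> \<xi>) * ((q - y) \<bullet> \<xi>) \<partial>lborel)"
  proof (intro integral_mono G_qf)
    show "integrable lborel (\<lambda>y. \<alpha>1 * gg \<xi> (q - y))" using i1 by simp
    fix y
    have ms: "\<alpha>1 \<le> mu_s \<mu> q y"
      using mu_bounds[of q] mu_bounds[of y] by (auto simp: mu_s_def)
    have "\<alpha>1 * gg \<xi> (q - y) \<le> mu_s \<mu> q y * gg \<xi> (q - y)"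
      using ms gg_nonneg by (intro mult_right_mono) auto
    then show "\<alpha>1 * gg \<xi> (q - y) \<le> \<rho> (q - y) * mu_s \<mu> q y / (norm (q - y))\<^sup>2 * ((q - y) \<bullet> \<xi>) * ((q - y) \<bullet> \<xi>)"
      by (simp add: gg_def mult_ac)
  qed
  also have "\<dots> = \<xi> \<bullet> (Gmat \<rho> \<mu> q *v \<xi>)" by (rule G_qf(1)[symmetric])
  finally show ?thesis .
qed


lemma hh_pos:
  fixes \<J> :: "(real^'d) set" and \<delta>0 :: real
  assumes delta0: "\<delta>0 > 0"
    and J_sphere: "\<J> \<subseteq> sphere 0 1"
    and J_pos: "emeasure lborel {t *\<^sub>R x | t x. x \<in> \<J> \<and> 0 < t \<and> t < 1} > 0"
    and supp: "{x. x \<noteq> 0 \<and> (x /\<^sub>R norm x \<in> \<J> \<or> - (x /\<^sub>R norm x) \<in> \<J>)} \<inter> ball 0 \<delta>0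
                 \<subseteq> esupp \<rho>"
    and xi: "norm \<xi> = 1"
  shows "\<xi> \<bullet> (MM *v \<xi>) > 0"
proof -
  have "\<exists>u\<in>\<J>. \<xi> \<bullet> u \<noteq> 0"
  proof (rule ccontr)
    assume "\<not> ?thesis"
    then have J0: "\<forall>u\<in>\<J>. \<xi> \<bullet> u = 0" by auto
    define C where "C = {t *\<^sub>R x | t x. x \<in> \<J> \<and> 0 < t \<and> t < 1}"
    define H where "H = {x. \<xi> \<bullet> x = 0}"
    have CH: "C \<subseteq> H" using J0 unfolding C_def H_def by auto
    have "negligible H" unfolding H_def using xi by (intro negligible_hyperplane) auto
    then have "H \<in> null_sets lebesgue" by (simp add: negligible_iff_null_sets)
    moreover have "H \<in> sets lborel" unfolding H_def by measurable
    ultimately have Hn: "H \<in> null_sets lborel" using null_sets_completion_iff by blast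
    have "emeasure lborel C = 0"
    proof (cases "C \<in> sets lborel")
      case True
      then show ?thesis using CH Hn by (meson null_sets_subset null_setsD1)
    next
      case False
      then show ?thesis by (simp add: emeasure_notin_sets)
    qed
    then show False using J_pos unfolding C_def by simp
  qed
  then obtain u where u: "u \<in> \<J>" "\<xi> \<bullet> u \<noteq> 0" by blast
  have nu: "norm u = 1" using u J_sphere by auto
  define x1 where "x1 = (\<delta>0 / 2) *\<^sub>R u"
  have nx1: "norm x1 = \<delta>0 / 2" using nu delta0 by (simp add: x1_def)
  have a1: "x1 \<noteq> 0" using nx1 delta0 by auto
  have a2: "x1 /\<^sub>R norm x1 = u" using nx1 delta0 by (simp add: x1_def)
  have a3: "x1 \<in> ball 0 \<delta>0" using nx1 delta0 by simp
  have mem: "x1 \<in> {x. x \<noteq> 0 \<and> (x /\<^sub>R norm x \<in> \<J> \<or> - (x /\<^sub>R norm x) \<in> \<J>)} \<inter> ball 0 \<delta>0"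
    using a1 a2 a3 u(1) by blast
  have "x1 \<in> esupp \<rho>" using subsetD[OF supp mem] .
  define e where "e = \<bar>\<xi> \<bullet> x1\<bar>"
  have e: "e > 0" using u delta0 by (simp add: e_def x1_def)
  have pos: "emeasure lborel ({z. \<rho> z \<noteq> 0} \<inter> ball x1 e) > 0"
    using \<open>x1 \<in> esupp \<rho>\<close> e unfolding esupp_def by auto
  have nz: "\<xi> \<bullet> z \<noteq> 0" if "z \<in> ball x1 e" for z
  proof
    assume "\<xi> \<bullet> z = 0"
    then have "\<bar>\<xi> \<bullet> (x1 - z)\<bar> = e" by (simp add: e_def inner_diff_right)
    moreover have "\<bar>\<xi> \<bullet> (x1 - z)\<bar> \<le> norm (x1 - z)"
      using Cauchy_Schwarz_ineq2[of \<xi> "x1 - z"] xi by simp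
    moreover have "norm (x1 - z) < e" using that by (simp add: dist_norm)
    ultimately show False by simp
  qed
  have ge: "0 \<le> integral\<^sup>L lborel (gg \<xi>)" using gg_nonneg by simp
  show ?thesis
  proof (rule ccontr)
    assume "\<not> ?thesis"
    then have "integral\<^sup>L lborel (gg \<xi>) = 0" using ge hh_eq(1) by simp
    then have "AE z in lborel. gg \<xi> z = 0"
      using integral_nonneg_eq_0_iff_AE[OF hh_eq(2)] gg_nonneg by simp
    then have "AE z in lborel. z \<in> ball x1 e \<longrightarrow> \<rho> z = 0"
    proof (rule AE_mp, intro AE_I2 impI)
      fix z assume g: "gg \<xi> z = 0" and zb: "z \<in> ball x1 e"
      have "z \<noteq> 0" using nz[OF zb] by auto
      then show "\<rho> z = 0" using g nz[OF zb] by (simp add: gg_def inner_commute)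
    qed
    moreover have eq: "{z \<in> space lborel. \<not> (z \<in> ball x1 e \<longrightarrow> \<rho> z = 0)} = {z. \<rho> z \<noteq> 0} \<inter> ball x1 e"
      by auto
    moreover have m: "{z. \<rho> z \<noteq> 0} \<inter> ball x1 e \<in> sets lborel" by measurable
    ultimately have "emeasure lborel ({z. \<rho> z \<noteq> 0} \<inter> ball x1 e) = 0"
      using AE_iff_measurable[OF m eq] by simp
    then show False using pos by simp
  qed
qed

end
theorem proposition2p2:
  fixes \<rho> \<mu> :: "real^'d \<Rightarrow> real" and \<J> :: "(real^'d) set"
    and \<delta>0 \<alpha>1 \<alpha>2 :: real
  assumes rho_int: "integrable lborel \<rho>"
    and rho_nonneg: "\<And>z. \<rho> z \<ge> 0"
    and rho_even: "\<And>z. \<rho> (- z) = \<rho> z"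
    and a1_pos: "(LINT z|lborel. \<rho> z) > 0"
    and a2_fin: "integrable lborel (\<lambda>z. (norm z)\<^sup>2 * \<rho> z)"
    and delta0: "\<delta>0 > 0"
    and J_sphere: "\<J> \<subseteq> sphere 0 1"
    and J_open: "openin (top_of_set (sphere 0 1)) \<J>"
    and J_pos: "emeasure lborel {t *\<^sub>R x | t x. x \<in> \<J> \<and> 0 < t \<and> t < 1} > 0"
    and supp: "{x. x \<noteq> 0 \<and> (x /\<^sub>R norm x \<in> \<J> \<or> - (x /\<^sub>R norm x) \<in> \<J>)} \<inter> ball 0 \<delta>0
                 \<subseteq> esupp \<rho>"
    and mu_meas: "\<mu> \<in> borel_measurable lborel"
    and mu_per: "unit_periodic \<mu>"
    and alpha: "0 < \<alpha>1" "\<alpha>1 \<le> \<alpha>2"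
    and mu_bounds: "\<And>y. \<alpha>1 \<le> \<mu> y \<and> \<mu> y \<le> \<alpha>2"
  shows "\<exists>c C. 0 < c \<and> 0 < C \<and>
           (\<forall>\<psi>. L2per \<psi> \<longrightarrow> L2per (Gop \<rho> \<mu> \<psi>) \<and>
                 c * L2norm_sq \<psi> \<le> L2norm_sq (Gop \<rho> \<mu> \<psi>) \<and>
                 L2norm_sq (Gop \<rho> \<mu> \<psi>) \<le> C * L2norm_sq \<psi>) \<and>
           (\<forall>\<phi>. L2per \<phi> \<longrightarrow> (\<exists>\<psi>. L2per \<psi> \<and>
                 (AE q in lborel. Gop \<rho> \<mu> \<psi> q = \<phi> q)))"
  proof -
  note ctx = rho_int rho_nonneg rho_even mu_meas mu_per alpha mu_bounds
  have rm[measurable]: "\<rho> \<in> borel_measurable borel"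
    using borel_measurable_integrable[OF rho_int] by simp
  have Gm[measurable]: "Gmat \<rho> \<mu> \<in> borel_measurable lborel" by (rule G_meas[OF ctx])
  define f where "f = (\<lambda>\<xi>::real^'d. \<xi> \<bullet> (MM \<rho> *v \<xi>))"
  have fc: "continuous_on (sphere 0 1) f"
    unfolding f_def
    by (intro continuous_on_inner continuous_on_id linear_continuous_on matrix_vector_mul_bounded_linear)
  have sne: "sphere (0::real^'d) 1 \<noteq> {}" by simp
  obtain \<xi>0 where \<xi>0: "\<xi>0 \<in> sphere 0 1" "\<And>\<xi>. \<xi> \<in> sphere 0 1 \<Longrightarrow> f \<xi>0 \<le> f \<xi>"
    using continuous_attains_inf[OF compact_sphere sne fc] by blast
  define c0 where "c0 = f \<xi>0"
  have c0: "c0 > 0" unfolding c0_def f_def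
    using hh_pos[OF ctx delta0 J_sphere J_pos supp] \<xi>0(1) by simp
  define c1 where "c1 = \<alpha>1 * c0"
  have c1: "c1 > 0" using c0 alpha by (simp add: c1_def)
  have low: "c1 * norm \<xi> \<le> norm (Gmat \<rho> \<mu> q *v \<xi>)" for q \<xi>
  proof (cases "\<xi> = 0")
    case True then show ?thesis by simp
  next
    case False
    define u where "u = \<xi> /\<^sub>R norm \<xi>"
    have u: "u \<in> sphere 0 1" using False by (simp add: u_def)
    have xu: "\<xi> = norm \<xi> *\<^sub>R u" using False by (simp add: u_def)
    have "c1 \<le> u \<bullet> (Gmat \<rho> \<mu> q *v u)"
    proof -
      have "c0 \<le> f u" using \<xi>0(2)[OF u] by (simp add: c0_def)
      then have "\<alpha>1 * c0 \<le> \<alpha>1 * (u \<bullet> (MM \<rho> *v u))" using alpha by (simp add: f_def)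
      also have "\<dots> \<le> u \<bullet> (Gmat \<rho> \<mu> q *v u)" by (rule G_lower[OF ctx])
      finally show ?thesis by (simp add: c1_def)
    qed
    then have "c1 * (norm \<xi>)\<^sup>2 \<le> (norm \<xi>)\<^sup>2 * (u \<bullet> (Gmat \<rho> \<mu> q *v u))"
      by (metis mult.commute mult_right_mono zero_le_power2)
    also have "\<dots> = \<xi> \<bullet> (Gmat \<rho> \<mu> q *v \<xi>)"
      by (subst (2 3) xu) (simp add: matrix_vector_mult_scaleR power2_eq_square)
    also have "\<dots> \<le> norm \<xi> * norm (Gmat \<rho> \<mu> q *v \<xi>)"
      using Cauchy_Schwarz_ineq2 by (rule order_trans[OF abs_ge_self])
    finally have "norm \<xi> * (c1 * norm \<xi>) \<le> norm \<xi> * norm (Gmat \<rho> \<mu> q *v \<xi>)"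
      by (simp add: power2_eq_square mult_ac)
    then show ?thesis using False by (simp add: mult_le_cancel_left)
  qed
  define a1 where "a1 = integral\<^sup>L lborel \<rho>"
  define B where "B = \<alpha>2 * a1"
  have B: "B > 0" using a1_pos alpha by (simp add: B_def a1_def)
  have up: "norm (Gmat \<rho> \<mu> q *v \<xi>) \<le> B * norm \<xi>" for q \<xi>
    using G_upper[OF ctx] by (simp add: B_def a1_def)
  have cellm[measurable]: "cell \<in> sets lborel" unfolding cell_def by simp
  have Gop_meas: "Gop \<rho> \<mu> \<psi> \<in> borel_measurable lborel" if "\<psi> \<in> borel_measurable lborel" for \<psi>
  proof -
    note [measurable] = that
    show ?thesis unfolding Gop_def[abs_def] matrix_vector_mult_def by measurable
  qed
  have sq_int: "set_integrable lborel cell (\<lambda>x. (norm (g x))\<^sup>2)"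
    if gm: "g \<in> borel_measurable lborel" and hi: "set_integrable lborel cell (\<lambda>x. (norm (h x))\<^sup>2)"
      and gh: "\<And>x. norm (g x) \<le> K * norm (h x)"
    for g h :: "real^'d \<Rightarrow> real^'d" and K :: real
  proof -
    note [measurable] = gm
    have "set_integrable lborel cell (\<lambda>x. K\<^sup>2 * (norm (h x))\<^sup>2)"
      using hi by (intro set_integrable_mult_right) auto
    then show ?thesis unfolding set_integrable_def
    proof (rule Bochner_Integration.integrable_bound)
      show "(\<lambda>x. indicator cell x *\<^sub>R (norm (g x))\<^sup>2) \<in> borel_measurable lborel" by measurable
      show "AE x in lborel. norm (indicator cell x *\<^sub>R (norm (g x))\<^sup>2 :: real)
              \<le> norm (indicator cell x *\<^sub>R (K\<^sup>2 * (norm (h x))\<^sup>2) :: real)"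
      proof (intro AE_I2)
        fix x
        have "(norm (g x))\<^sup>2 \<le> (K * norm (h x))\<^sup>2"
          using gh[of x] by (intro power_mono) auto
        then have "(norm (g x))\<^sup>2 \<le> K\<^sup>2 * (norm (h x))\<^sup>2" by (simp add: power_mult_distrib)
        then show "norm (indicator cell x *\<^sub>R (norm (g x))\<^sup>2 :: real)
              \<le> norm (indicator cell x *\<^sub>R (K\<^sup>2 * (norm (h x))\<^sup>2) :: real)"
          by (simp add: indicator_def)
      qed
    qed
  qed
  have mono: "c * L2norm_sq h \<le> L2norm_sq g"
    if "set_integrable lborel cell (\<lambda>x. (norm (h x))\<^sup>2)" "set_integrable lborel cell (\<lambda>x. (norm (g x))\<^sup>2)"
      and "\<And>x. c * (norm (h x))\<^sup>2 \<le> (norm (g x))\<^sup>2"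
    for g h :: "real^'d \<Rightarrow> real^'d" and c :: real
  proof -
    have "c * L2norm_sq h = (LINT x:cell|lborel. c * (norm (h x))\<^sup>2)"
      unfolding L2norm_sq_def by simp
    also have "\<dots> \<le> (LINT x:cell|lborel. (norm (g x))\<^sup>2)"
      using that by (intro set_integral_mono) auto
    finally show ?thesis unfolding L2norm_sq_def .
  qed
  have part1: "L2per (Gop \<rho> \<mu> \<psi>) \<and> c1\<^sup>2 * L2norm_sq \<psi> \<le> L2norm_sq (Gop \<rho> \<mu> \<psi>) \<and>
                 L2norm_sq (Gop \<rho> \<mu> \<psi>) \<le> B\<^sup>2 * L2norm_sq \<psi>" if \<psi>: "L2per \<psi>" for \<psi>
  proof -
    have \<psi>m: "\<psi> \<in> borel_measurable lborel" and \<psi>p: "unit_periodic \<psi>"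
      and \<psi>i: "set_integrable lborel cell (\<lambda>x. (norm (\<psi> x))\<^sup>2)"
      using \<psi> unfolding L2per_def by auto
    have gm: "Gop \<rho> \<mu> \<psi> \<in> borel_measurable lborel" by (rule Gop_meas[OF \<psi>m])
    have gp: "unit_periodic (Gop \<rho> \<mu> \<psi>)"
      using G_per[OF ctx] \<psi>p unfolding unit_periodic_def Gop_def by simp
    have gb: "norm (Gop \<rho> \<mu> \<psi> x) \<le> B * norm (\<psi> x)" for x
      unfolding Gop_def by (rule up)
    have gi: "set_integrable lborel cell (\<lambda>x. (norm (Gop \<rho> \<mu> \<psi> x))\<^sup>2)"
      by (rule sq_int[OF gm \<psi>i gb])
    have lo: "c1\<^sup>2 * (norm (\<psi> x))\<^sup>2 \<le> (norm (Gop \<rho> \<mu> \<psi> x))\<^sup>2" for x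
    proof -
      have "(c1 * norm (\<psi> x))\<^sup>2 \<le> (norm (Gop \<rho> \<mu> \<psi> x))\<^sup>2"
        using low[of "\<psi> x" x] c1 unfolding Gop_def by (intro power_mono) auto
      then show ?thesis by (simp add: power_mult_distrib)
    qed
    have hi: "1 * (norm (Gop \<rho> \<mu> \<psi> x))\<^sup>2 \<le> B\<^sup>2 * (norm (\<psi> x))\<^sup>2" for x
    proof -
      have "(norm (Gop \<rho> \<mu> \<psi> x))\<^sup>2 \<le> (B * norm (\<psi> x))\<^sup>2"
        using gb[of x] by (intro power_mono) auto
      then show ?thesis by (simp add: power_mult_distrib)
    qed
    have "1 * L2norm_sq (Gop \<rho> \<mu> \<psi>) \<le> L2norm_sq (\<lambda>x. B *\<^sub>R \<psi> x)"
      by (rule mono[OF gi]) (use \<psi>i hi in \<open>auto simp: power_mult_distrib\<close>)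
    also have "L2norm_sq (\<lambda>x. B *\<^sub>R \<psi> x) = B\<^sup>2 * L2norm_sq \<psi>"
      unfolding L2norm_sq_def using B by (simp add: power_mult_distrib)
    finally have "L2norm_sq (Gop \<rho> \<mu> \<psi>) \<le> B\<^sup>2 * L2norm_sq \<psi>" by simp
    moreover have "c1\<^sup>2 * L2norm_sq \<psi> \<le> L2norm_sq (Gop \<rho> \<mu> \<psi>)"
      by (rule mono[OF \<psi>i gi lo])
    moreover have "L2per (Gop \<rho> \<mu> \<psi>)" unfolding L2per_def using gm gp gi by simp
    ultimately show ?thesis by simp
  qed
  have part2: "\<exists>\<psi>. L2per \<psi> \<and> (AE q in lborel. Gop \<rho> \<mu> \<psi> q = \<phi> q)" if \<phi>: "L2per \<phi>" for \<phi>
  proof -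
    have \<phi>m[measurable]: "\<phi> \<in> borel_measurable lborel" and \<phi>p: "unit_periodic \<phi>"
      and \<phi>i: "set_integrable lborel cell (\<lambda>x. (norm (\<phi> x))\<^sup>2)"
      using \<phi> unfolding L2per_def by auto
    define \<psi> where "\<psi> = (\<lambda>q. \<chi> k. det (\<chi> i j. if j = k then \<phi> q $ i else Gmat \<rho> \<mu> q $ i $ j) / det (Gmat \<rho> \<mu> q))"
    have dnz: "det (Gmat \<rho> \<mu> q) \<noteq> 0" for q
    proof -
      have "inj ((*v) (Gmat \<rho> \<mu> q))"
      proof (rule injI)
        fix x y assume "Gmat \<rho> \<mu> q *v x = Gmat \<rho> \<mu> q *v y"
        then have "Gmat \<rho> \<mu> q *v (x - y) = 0" by (simp add: matrix_vector_mult_diff_distrib)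
        then have "c1 * norm (x - y) \<le> 0" using low[of "x - y" q] by simp
        then show "x = y" using c1 by (simp add: mult_le_0_iff)
      qed
      then show ?thesis using det_nz_iff_inj[OF matrix_vector_mul_linear[of "Gmat \<rho> \<mu> q"]] by simp
    qed
    have eq: "Gmat \<rho> \<mu> q *v \<psi> q = \<phi> q" for q
      using cramer[OF dnz[of q], of "\<psi> q" "\<phi> q"] by (simp add: \<psi>_def)
    have \<psi>m: "\<psi> \<in> borel_measurable lborel"
      unfolding \<psi>_def det_def by measurable
    have \<psi>p: "unit_periodic \<psi>"
      unfolding unit_periodic_def
    proof (intro allI impI)
      fix x k :: "real^'d" assume k: "\<forall>i. k $ i \<in> \<int>"
      have h1: "Gmat \<rho> \<mu> (x + k) = Gmat \<rho> \<mu> x" and h2: "\<phi> (x + k) = \<phi> x"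
        using G_per[OF ctx] \<phi>p k unfolding unit_periodic_def by blast+
      show "\<psi> (x + k) = \<psi> x" unfolding \<psi>_def h1 h2 ..
    qed
    have \<psi>b: "norm (\<psi> x) \<le> (1 / c1) * norm (\<phi> x)" for x
      using low[of "\<psi> x" x] c1 eq[of x] by (simp add: field_simps)
    have \<psi>i: "set_integrable lborel cell (\<lambda>x. (norm (\<psi> x))\<^sup>2)"
      by (rule sq_int[OF \<psi>m \<phi>i \<psi>b])
    have "L2per \<psi>" unfolding L2per_def using \<psi>m \<psi>p \<psi>i by simp
    moreover have "AE q in lborel. Gop \<rho> \<mu> \<psi> q = \<phi> q" by (simp add: Gop_def eq)
    ultimately show ?thesis by blast
  qed
  show ?thesis
    using c1 B part1 part2 by (intro exI[of _ "c1\<^sup>2"] exI[of _ "B\<^sup>2"]) auto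
qed

end
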